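(* Let $f:\mathbb{R}^d\to\mathbb{R}$ be measurable and bounded below with $\int_{\mathbb{R}^d}|f(x')|\varphi_{x,\tau}(x')\,dx'<\infty$ for all $x\in\mathbb{R}^d$, and let $\tau>0$, $x_0\in\mathbb{R}^d$. Suppose a sequence $x_0,x_1,\dots,x_K$ satisfies, for each $k=0,\dots,K-1$, that $x_{k+1}$ is a minimizer of the map $$x\mapsto D_{\mathrm{KL}}(\varphi_{x,\tau}\,\|\,q_{x_k,\tau}).$$ Then $F^H_\tau(x_k)\le F^H_\tau(x_{k-1})$ for all $1\le k\le K$.
   Context: $\varphi_{x,\tau}$ denotes the Gaussian density on $\mathbb{R}^d$ with mean $x$ and covariance $\tau I$. The heat regularization of $f$ is $F^H_\tau(x) := \int_{\mathbb{R}^d} f(x')\,\varphi_{x,\tau}(x')\,dx'$. For $x\in\mathbb{R}^d$, $\tau>0$, $q_{x,\tau}(x') := Z_{x,\tau}^{-1}\exp\left(-f(x') - \frac{1}{2\tau}|x-x'|^2\right)$, with $Z_{x,\tau}$ the normalizing constant. The Kullback–Leibler divergence is $D_{\mathrm{KL}}(p\|q) := \int_{\mathbb{R}^d}\log\left(\frac{p(x)}{q(x)}\right)p(x)\,dx$. *)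

theory Defs
  imports "HOL-Analysis.Analysis"
begin

definition gauss_dens :: "real \<Rightarrow> 'a::euclidean_space \<Rightarrow> 'a \<Rightarrow> real" where
  "gauss_dens \<tau> x x' =
     (2 * pi * \<tau>) powr (- real DIM('a) / 2) * exp (- (norm (x' - x))\<^sup>2 / (2 * \<tau>))"

text \<open>Heat regularization F^H_tau(x) = integral of f against the Gaussian at x.\<close>
definition heat_reg :: "('a::euclidean_space \<Rightarrow> real) \<Rightarrow> real \<Rightarrow> 'a \<Rightarrow> real" where
  "heat_reg f \<tau> x = (\<integral>x'. f x' * gauss_dens \<tau> x x' \<partial>lebesgue)"

definition Zc :: "('a::euclidean_space \<Rightarrow> real) \<Rightarrow> real \<Rightarrow> 'a \<Rightarrow> real" where
  "Zc f \<tau> x = (\<integral>x'. exp (- f x' - (norm (x - x'))\<^sup>2 / (2 * \<tau>)) \<partial>lebesgue)"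

definition q_dens :: "('a::euclidean_space \<Rightarrow> real) \<Rightarrow> real \<Rightarrow> 'a \<Rightarrow> 'a \<Rightarrow> real" where
  "q_dens f \<tau> x x' = exp (- f x' - (norm (x - x'))\<^sup>2 / (2 * \<tau>)) / Zc f \<tau> x"

definition KL_div :: "('a::euclidean_space \<Rightarrow> real) \<Rightarrow> ('a \<Rightarrow> real) \<Rightarrow> real" where
  "KL_div p q = (\<integral>x. ln (p x / q x) * p x \<partial>lebesgue)"

end

theory Submission
  imports Defs "HOL-Probability.Probability"
begin

lemma gauss1_integrable:
  assumes "s > 0" shows "integrable lborel (\<lambda>t::real. exp (-(t^2) / s))"
proof -
  have "integrable lborel (\<lambda>t. sqrt (pi * s) * normal_density 0 (sqrt (s/2)) t)"
    using assms by (intro integrable_mult_right integrable_normal_density) simp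
  moreover have "(\<lambda>t. sqrt (pi * s) * normal_density 0 (sqrt (s/2)) t) = (\<lambda>t::real. exp (-(t^2) / s))"
  proof
    fix t :: real
    have e: "(sqrt (s/2))\<^sup>2 = s/2" using assms by simp
    have "sqrt (pi * s) > 0" using assms by simp
    have "sqrt (s/2) > 0" using assms by simp
    with \<open>sqrt (pi * s) > 0\<close> show "sqrt (pi * s) * normal_density 0 (sqrt (s/2)) t = exp (-(t^2) / s)"
      unfolding normal_density_def e by simp
  qed
  ultimately show ?thesis by simp
qed

lemma norm_sum_basis_sq:
  "(norm (\<Sum>b\<in>Basis. f b *\<^sub>R b :: 'a::euclidean_space))^2 = (\<Sum>b\<in>Basis. (f b)^2)"
proof -
  define v where "v = (\<Sum>b\<in>Basis. f b *\<^sub>R b :: 'a)"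
  have "(norm v)^2 = v \<bullet> v" by (simp add: power2_norm_eq_inner)
  also have "\<dots> = (\<Sum>b\<in>Basis. (v \<bullet> b) * (v \<bullet> b))" by (rule euclidean_inner)
  also have "\<dots> = (\<Sum>b\<in>Basis. (f b)^2)"
    by (rule sum.cong) (simp_all add: v_def inner_sum_left_Basis power2_eq_square)
  finally show ?thesis by (simp add: v_def)
qed

lemma gauss_integrable:
  assumes "s > 0" shows "integrable lborel (\<lambda>(z::'a::euclidean_space). exp (- ((norm z)\<^sup>2) / s))"
proof -
  interpret product_sigma_finite "\<lambda>_::'a. lborel::real measure" by standard
  have "(\<integral>\<^sup>+z. ennreal (exp (- ((norm z)\<^sup>2) / s)) \<partial>(lborel::'a measure)) =
     (\<integral>\<^sup>+f. ennreal (exp (- ((norm (\<Sum>b\<in>Basis. f b *\<^sub>R b :: 'a))\<^sup>2) / s)) \<partial>(\<Pi>\<^sub>M b\<in>Basis. lborel))"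
  proof -
    have e: "(lborel::'a measure) = distr (\<Pi>\<^sub>M b\<in>Basis. lborel) borel (\<lambda>f. \<Sum>b\<in>Basis. f b *\<^sub>R b)"
      by (rule lborel_eq)
    show ?thesis
      apply (subst e)
      apply (rule nn_integral_distr)
       apply simp
      apply simp
      done
  qed
  also have "\<dots> = (\<integral>\<^sup>+f. (\<Prod>b\<in>(Basis::'a set). ennreal (exp (- ((f b)\<^sup>2) / s))) \<partial>(\<Pi>\<^sub>M b\<in>Basis. lborel))"
  proof (intro nn_integral_cong)
    fix f :: "'a \<Rightarrow> real"
    have "- ((norm (\<Sum>b\<in>Basis. f b *\<^sub>R b :: 'a))\<^sup>2) / s = (\<Sum>b\<in>Basis. - ((f b)\<^sup>2) / s)"
      unfolding norm_sum_basis_sq by (simp add: sum_divide_distrib sum_negf)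
    then have "exp (- ((norm (\<Sum>b\<in>Basis. f b *\<^sub>R b :: 'a))\<^sup>2) / s) = (\<Prod>b\<in>(Basis::'a set). exp (- ((f b)\<^sup>2) / s))"
      by (simp add: exp_sum)
    then show "ennreal (exp (- ((norm (\<Sum>b\<in>Basis. f b *\<^sub>R b :: 'a))\<^sup>2) / s)) = (\<Prod>b\<in>(Basis::'a set). ennreal (exp (- ((f b)\<^sup>2) / s)))"
      by (simp add: prod_ennreal)
  qed
  also have "\<dots> = (\<Prod>b\<in>(Basis::'a set). \<integral>\<^sup>+t. ennreal (exp (- (t\<^sup>2) / s)) \<partial>lborel)"
    by (rule product_nn_integral_prod) auto
  also have "\<dots> < \<infinity>"
  proof -
    have "(\<integral>\<^sup>+t. ennreal (exp (- (t\<^sup>2) / s)) \<partial>lborel) < \<infinity>"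
    proof -
      have "(\<integral>\<^sup>+t. ennreal (norm (exp (- (t\<^sup>2) / s))) \<partial>lborel) < \<infinity>"
        using gauss1_integrable[OF assms] unfolding integrable_iff_bounded by blast
      then show ?thesis by simp
    qed
    then show ?thesis by (simp add: power_less_top_ennreal)
  qed
  finally have fin: "(\<integral>\<^sup>+z. ennreal (exp (- ((norm z)\<^sup>2) / s)) \<partial>(lborel::'a measure)) < \<infinity>" .
  show ?thesis
  proof (rule integrableI_bounded)
    show "(\<lambda>(z::'a). exp (- ((norm z)\<^sup>2) / s)) \<in> borel_measurable lborel" by measurable
    show "(\<integral>\<^sup>+z. ennreal (norm (exp (- ((norm z)\<^sup>2) / s))) \<partial>(lborel::'a measure)) < \<infinity>"
      using fin by simp
  qed
qed

lemma distr_affine_lborel: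
  fixes t :: "'a::euclidean_space"
  assumes "\<bar>c\<bar> = 1"
  shows "distr lborel borel (\<lambda>x. t + c *\<^sub>R x) = (lborel :: 'a measure)"
proof -
  have "c \<noteq> 0" using assms by auto
  from lborel_affine[OF this, of t] assms show ?thesis by (simp add: density_1)
qed

lemma integral_affine_lborel:
  fixes g :: "'a::euclidean_space \<Rightarrow> 'b::{banach, second_countable_topology}"
  assumes "\<bar>c\<bar> = 1" and [measurable]: "g \<in> borel_measurable borel"
  shows "integral\<^sup>L lborel g = (\<integral>x. g (t + c *\<^sub>R x) \<partial>lborel)"
    and "integrable lborel g \<longleftrightarrow> integrable lborel (\<lambda>x. g (t + c *\<^sub>R x))"
proof -
  have T: "(\<lambda>x::'a. t + c *\<^sub>R x) \<in> lborel \<rightarrow>\<^sub>M borel" by measurable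
  have gm: "g \<in> borel_measurable borel" by measurable
  have "integral\<^sup>L lborel g = integral\<^sup>L (distr lborel borel (\<lambda>x. t + c *\<^sub>R x)) g"
    using distr_affine_lborel[OF assms(1), of t] by simp
  also have "\<dots> = (\<integral>x. g (t + c *\<^sub>R x) \<partial>lborel)"
    by (rule integral_distr[OF T gm])
  finally show "integral\<^sup>L lborel g = (\<integral>x. g (t + c *\<^sub>R x) \<partial>lborel)" .
  have "integrable lborel g \<longleftrightarrow> integrable (distr lborel borel (\<lambda>x. t + c *\<^sub>R x)) g"
    using distr_affine_lborel[OF assms(1), of t] by simp
  also have "\<dots> \<longleftrightarrow> integrable lborel (\<lambda>x. g (t + c *\<^sub>R x))"
    by (rule integrable_distr_eq[OF T gm])
  finally show "integrable lborel g \<longleftrightarrow> integrable lborel (\<lambda>x. g (t + c *\<^sub>R x))" .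
qed

lemma gauss_dens_shift: "gauss_dens \<tau> x (x + z) = gauss_dens \<tau> 0 z"
  by (simp add: gauss_dens_def)

lemma gauss_dens_nonneg: "0 \<le> gauss_dens \<tau> x y"
  by (simp add: gauss_dens_def)

lemma gauss_dens_meas[measurable]: "gauss_dens \<tau> x \<in> borel_measurable borel"
  unfolding gauss_dens_def by measurable

lemma gauss0_integrable:
  assumes "\<tau> > 0" shows "integrable lborel (gauss_dens \<tau> (0::'a::euclidean_space))"
proof -
  have "integrable lborel (\<lambda>(z::'a). (2 * pi * \<tau>) powr (- real DIM('a) / 2) * exp (- ((norm z)\<^sup>2) / (2*\<tau>)))"
    using gauss_integrable[of "2*\<tau>"] assms by (intro integrable_mult_right) auto
  then show ?thesis by (simp add: gauss_dens_def[abs_def])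
qed

lemma gauss_integrable_lborel:
  assumes "\<tau> > 0" shows "integrable lborel (gauss_dens \<tau> (x::'a::euclidean_space))"
  using integral_affine_lborel(2)[of 1 "gauss_dens \<tau> x" x] gauss0_integrable[OF assms]
  by (simp add: gauss_dens_shift)

lemma gauss_integral_lborel:
  "integral\<^sup>L lborel (gauss_dens \<tau> (x::'a::euclidean_space)) = integral\<^sup>L lborel (gauss_dens \<tau> (0::'a))"
  using integral_affine_lborel(1)[of 1 "gauss_dens \<tau> x" x]
  by (simp add: gauss_dens_shift)

lemma scalar_aux:
  fixes n \<tau> :: real
  assumes "\<tau> > 0" "n \<ge> 0"
  shows "n * exp (- (n\<^sup>2) / (2*\<tau>)) \<le> exp (- (n\<^sup>2) / (2*\<tau>)) + 4*\<tau>*exp (- (n\<^sup>2) / (4*\<tau>))"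
proof -
  define a where "a = n\<^sup>2 / (4*\<tau>)"
  have "a \<le> exp a" using exp_ge_add_one_self[of a] by linarith
  then have "n\<^sup>2 / (4*\<tau>) \<le> exp a" by (simp only: a_def)
  then have n2: "n\<^sup>2 \<le> exp a * (4*\<tau>)" using pos_divide_le_eq[of "4*\<tau>" "n\<^sup>2" "exp a"] assms by simp
  have e2: "- (n\<^sup>2) / (2*\<tau>) = -2*a" unfolding a_def using assms by simp
  have e4: "- (n\<^sup>2) / (4*\<tau>) = -a" unfolding a_def by simp
  have n1: "n \<le> 1 + n\<^sup>2"
  proof (cases "n \<le> 1")
    case True then show ?thesis by (simp add: add_increasing2)
  next
    case False
    then have "n * 1 \<le> n * n" by (intro mult_left_mono) auto
    then show ?thesis by (simp add: power2_eq_square)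
  qed
  have "n * exp (-2*a) \<le> (1 + n\<^sup>2) * exp (-2*a)" using n1 by (intro mult_right_mono) auto
  also have "\<dots> = exp (-2*a) + n\<^sup>2 * exp (-2*a)" by (simp add: distrib_right)
  also have "\<dots> \<le> exp (-2*a) + exp a * (4*\<tau>) * exp (-2*a)"
    using n2 by (intro add_left_mono mult_right_mono) auto
  also have "exp a * (4*\<tau>) * exp (-2*a) = 4*\<tau>*exp (-a)"
  proof -
    have "exp a * exp (-2*a) = exp (-a)" by (simp add: exp_add[symmetric])
    then show ?thesis by (simp add: ac_simps)
  qed
  finally show ?thesis unfolding e2 e4 .
qed

lemma mom0_integrable:
  assumes "\<tau> > 0"
  shows "integrable lborel (\<lambda>(z::'a::euclidean_space). gauss_dens \<tau> 0 z *\<^sub>R z)"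
proof -
  define cst where "cst = (2 * pi * \<tau>) powr (- real DIM('a) / 2)"
  have cst: "cst > 0" using assms by (simp add: cst_def)
  have i: "integrable lborel (\<lambda>(z::'a). cst * exp (- ((norm z)\<^sup>2) / (2*\<tau>)) + cst * (4*\<tau>) * exp (- ((norm z)\<^sup>2) / (4*\<tau>)))"
    using gauss_integrable[of "2*\<tau>"] gauss_integrable[of "4*\<tau>"] assms
    by (intro Bochner_Integration.integrable_add integrable_mult_right) auto
  have m: "(\<lambda>(z::'a). gauss_dens \<tau> 0 z *\<^sub>R z) \<in> borel_measurable lborel"
    unfolding gauss_dens_def by measurable
  have "AE (z::'a) in lborel. norm (gauss_dens \<tau> 0 z *\<^sub>R z) \<le> norm (cst * exp (- ((norm z)\<^sup>2) / (2*\<tau>)) + cst * (4*\<tau>) * exp (- ((norm z)\<^sup>2) / (4*\<tau>)))"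
  proof (rule AE_I2)
    fix z :: 'a
    assume "z \<in> space lborel"
    have "norm (gauss_dens \<tau> 0 z *\<^sub>R z) = cst * (norm z * exp (- ((norm z)\<^sup>2) / (2*\<tau>)))"
      using cst by (simp add: gauss_dens_def cst_def abs_mult)
    also have "\<dots> \<le> cst * (exp (- ((norm z)\<^sup>2) / (2*\<tau>)) + 4*\<tau>*exp (- ((norm z)\<^sup>2) / (4*\<tau>)))"
      using scalar_aux[OF assms, of "norm z"] cst by (intro mult_left_mono) auto
    also have "\<dots> = norm (cst * exp (- ((norm z)\<^sup>2) / (2*\<tau>)) + cst * (4*\<tau>) * exp (- ((norm z)\<^sup>2) / (4*\<tau>)))"
      using cst assms by (simp add: algebra_simps)
    finally show "norm (gauss_dens \<tau> 0 z *\<^sub>R z) \<le> norm (cst * exp (- ((norm z)\<^sup>2) / (2*\<tau>)) + cst * (4*\<tau>) * exp (- ((norm z)\<^sup>2) / (4*\<tau>)))" .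
  qed
  with i m show ?thesis by (rule Bochner_Integration.integrable_bound)
qed

lemma mom0_integral:
  shows "(\<integral>z. gauss_dens \<tau> 0 z *\<^sub>R z \<partial>lborel) = (0::'a::euclidean_space)"
proof -
  let ?h = "\<lambda>(z::'a). gauss_dens \<tau> 0 z *\<^sub>R z"
  have m: "?h \<in> borel_measurable borel" unfolding gauss_dens_def by measurable
  have "integral\<^sup>L lborel ?h = (\<integral>z. ?h (0 + (-1) *\<^sub>R z) \<partial>lborel)"
    by (rule integral_affine_lborel(1)[OF _ m]) simp
  also have "\<dots> = (\<integral>z. - ?h z \<partial>lborel)"
    by (simp add: gauss_dens_def)
  also have "\<dots> = - integral\<^sup>L lborel ?h" by (rule Bochner_Integration.integral_minus)
  finally have "integral\<^sup>L lborel ?h = - integral\<^sup>L lborel ?h" .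
  then have "integral\<^sup>L lborel ?h + integral\<^sup>L lborel ?h = 0" by (metis add.right_inverse)
  then have "(2::real) *\<^sub>R integral\<^sup>L lborel ?h = 0" by (simp only: scaleR_2)
  then show ?thesis by simp
qed

lemma mom_integrable_integral:
  assumes "\<tau> > 0"
  shows "integrable lborel (\<lambda>x'. gauss_dens \<tau> x x' *\<^sub>R (x - x'))"
    and "(\<integral>x'. gauss_dens \<tau> x x' *\<^sub>R (x - x') \<partial>lborel) = (0::'a::euclidean_space)"
proof -
  let ?h = "\<lambda>x'. gauss_dens \<tau> x x' *\<^sub>R (x - x')"
  have m: "?h \<in> borel_measurable borel" unfolding gauss_dens_def by measurable
  have sh: "(\<lambda>z. ?h (x + 1 *\<^sub>R z)) = (\<lambda>z. - (gauss_dens \<tau> 0 z *\<^sub>R z))"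
    by (simp add: gauss_dens_shift fun_eq_iff)
  show "integrable lborel ?h"
    using integral_affine_lborel(2)[of 1 ?h x, OF _ m] mom0_integrable[OF assms]
    by (simp add: gauss_dens_shift)
  have "integral\<^sup>L lborel ?h = (\<integral>z. - (gauss_dens \<tau> 0 z *\<^sub>R z) \<partial>lborel)"
    using integral_affine_lborel(1)[of 1 ?h x, OF _ m] by (simp add: gauss_dens_shift)
  also have "\<dots> = 0" using mom0_integral[where 'a='a] by (simp add: Bochner_Integration.integral_minus)
  finally show "integral\<^sup>L lborel ?h = 0" .
qed

lemma gauss_meas_lborel[measurable]: "gauss_dens \<tau> x \<in> borel_measurable lborel"
  unfolding gauss_dens_def by measurable

lemma gauss_meas_lebesgue[measurable]: "gauss_dens \<tau> x \<in> borel_measurable lebesgue"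
  by (rule measurable_completion) (rule gauss_meas_lborel)

lemma gauss_leb:
  assumes "\<tau> > 0"
  shows "integrable lebesgue (gauss_dens \<tau> (x::'a::euclidean_space))"
    and "integral\<^sup>L lebesgue (gauss_dens \<tau> (x::'a::euclidean_space)) = integral\<^sup>L lborel (gauss_dens \<tau> (0::'a))"
proof -
  show "integrable lebesgue (gauss_dens \<tau> (x::'a::euclidean_space))"
    using integrable_completion[OF gauss_meas_lborel[of \<tau> x]] gauss_integrable_lborel[OF assms, of x] by simp
  show "integral\<^sup>L lebesgue (gauss_dens \<tau> (x::'a::euclidean_space)) = integral\<^sup>L lborel (gauss_dens \<tau> (0::'a))"
    using integral_completion[OF gauss_meas_lborel[of \<tau> x]] gauss_integral_lborel[of \<tau> x] by simp
qed

lemma mom_leb: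
  assumes "\<tau> > 0"
  shows "integrable lebesgue (\<lambda>x'. gauss_dens \<tau> x x' *\<^sub>R (x - x'))"
    and "(\<integral>x'. gauss_dens \<tau> x x' *\<^sub>R (x - x') \<partial>lebesgue) = (0::'a::euclidean_space)"
proof -
  have m: "(\<lambda>x'. gauss_dens \<tau> x x' *\<^sub>R (x - x')) \<in> borel_measurable lborel"
    unfolding gauss_dens_def by measurable
  show "integrable lebesgue (\<lambda>x'. gauss_dens \<tau> x x' *\<^sub>R (x - x'))"
    using integrable_completion[OF m] mom_integrable_integral(1)[OF assms, of x] by simp
  show "(\<integral>x'. gauss_dens \<tau> x x' *\<^sub>R (x - x') \<partial>lebesgue) = (0::'a::euclidean_space)"
    using integral_completion[OF m] mom_integrable_integral(2)[OF assms, of x] by simp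
qed

lemma f_gauss_integrable:
  fixes f :: "'a::euclidean_space \<Rightarrow> real"
  assumes [measurable]: "f \<in> borel_measurable lebesgue"
    and fi: "(\<integral>\<^sup>+ x'. ennreal (\<bar>f x'\<bar> * gauss_dens \<tau> x x') \<partial>lebesgue) < \<infinity>"
  shows "integrable lebesgue (\<lambda>x'. f x' * gauss_dens \<tau> x x')"
proof (rule integrableI_bounded)
  show "(\<lambda>x'. f x' * gauss_dens \<tau> x x') \<in> borel_measurable lebesgue" by measurable
  have "(\<lambda>x'. ennreal (norm (f x' * gauss_dens \<tau> x x'))) = (\<lambda>x'. ennreal (\<bar>f x'\<bar> * gauss_dens \<tau> x x'))"
    by (simp add: abs_mult gauss_dens_nonneg)
  then show "(\<integral>\<^sup>+ x'. ennreal (norm (f x' * gauss_dens \<tau> x x')) \<partial>lebesgue) < \<infinity>" using fi by simp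
qed

lemma Zc_pos:
  fixes f :: "'a::euclidean_space \<Rightarrow> real"
  assumes [measurable]: "f \<in> borel_measurable lebesgue"
    and c: "\<forall>y. c \<le> f y" and tau: "\<tau> > 0"
  shows "Zc f \<tau> y > 0"
proof -
  define cst where "cst = (2 * pi * \<tau>) powr (- real DIM('a) / 2)"
  have cst: "cst > 0" using tau by (simp add: cst_def)
  let ?e = "\<lambda>x'. exp (- f x' - (norm (y - x'))\<^sup>2 / (2 * \<tau>))"
  have nm: "(\<lambda>x'::'a. (norm (y - x'))\<^sup>2) \<in> borel_measurable lebesgue"
    by (rule measurable_completion) measurable
  have im: "(\<lambda>x'. - f x' - (norm (y - x'))\<^sup>2 / (2 * \<tau>)) \<in> borel_measurable lebesgue"
    using nm by (intro borel_measurable_diff borel_measurable_uminus borel_measurable_divide) auto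
  have em: "?e \<in> borel_measurable lebesgue"
    using measurable_compose[OF im borel_measurable_exp] by (simp add: comp_def)
  have bi: "integrable lebesgue (\<lambda>x'. (exp (- c) / cst) * gauss_dens \<tau> y x')"
    using gauss_leb(1)[OF tau, of y] by (rule integrable_mult_right)
  have ie: "integrable lebesgue ?e"
  proof (rule Bochner_Integration.integrable_bound[OF bi em], rule AE_I2)
    fix x' :: 'a
    have "- f x' - (norm (y - x'))\<^sup>2 / (2 * \<tau>) = (- f x') + (- (norm (y - x'))\<^sup>2 / (2 * \<tau>))"
      by simp
    then have "?e x' = exp (- f x') * exp (- (norm (y - x'))\<^sup>2 / (2 * \<tau>))"
      by (simp only: exp_add)
    also have "\<dots> \<le> exp (- c) * exp (- (norm (y - x'))\<^sup>2 / (2 * \<tau>))"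
      using c by (intro mult_right_mono) auto
    also have "\<dots> = (exp (- c) / cst) * gauss_dens \<tau> y x'"
    proof -
      have g: "gauss_dens \<tau> y x' = cst * exp (- (norm (y - x'))\<^sup>2 / (2 * \<tau>))"
        unfolding gauss_dens_def cst_def by (simp only: norm_minus_commute)
      show ?thesis unfolding g using cst by simp
    qed
    finally show "norm (?e x') \<le> norm ((exp (- c) / cst) * gauss_dens \<tau> y x')"
      using cst by (simp add: gauss_dens_nonneg)
  qed
  have nn: "0 \<le> Zc f \<tau> y" unfolding Zc_def by (rule Bochner_Integration.integral_nonneg) simp
  have "Zc f \<tau> y \<noteq> 0"
  proof
    assume "Zc f \<tau> y = 0"
    then have "AE x' in lebesgue. ?e x' = 0"
      using integral_nonneg_eq_0_iff_AE[OF ie] unfolding Zc_def by auto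
    then have "AE (x'::'a) in lebesgue. False" by simp
    then have "ae_filter (lebesgue::'a measure) = bot" using trivial_limit_def by blast
    then have "emeasure (lebesgue::'a measure) (space lebesgue) = 0" by (simp add: ae_filter_eq_bot_iff)
    then show False by simp
  qed
  with nn show ?thesis by simp
qed

lemma norm_sq_expand:
  fixes x y x' :: "'a::euclidean_space"
  shows "(norm (y - x'))\<^sup>2 = (norm (y - x))\<^sup>2 + 2 * ((y - x) \<bullet> (x - x')) + (norm (x' - x))\<^sup>2"
proof -
  have e: "y - x' = (y - x) + (x - x')" by simp
  have "(norm (y - x'))\<^sup>2 = (y - x') \<bullet> (y - x')" by (simp add: power2_norm_eq_inner)
  also have "\<dots> = ((y - x) + (x - x')) \<bullet> ((y - x) + (x - x'))" by (simp only: e[symmetric])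
  also have "\<dots> = (y - x) \<bullet> (y - x) + 2 * ((y - x) \<bullet> (x - x')) + (x - x') \<bullet> (x - x')"
    unfolding inner_add_left inner_add_right inner_commute[of "x - x'" "y - x"] by linarith
  also have "\<dots> = (norm (y - x))\<^sup>2 + 2 * ((y - x) \<bullet> (x - x')) + (norm (x' - x))\<^sup>2"
    by (simp add: power2_norm_eq_inner norm_minus_commute[of x' x])
  finally show ?thesis .
qed

lemma pointwise_KL:
  fixes f :: "'a::euclidean_space \<Rightarrow> real"
  assumes tau: "\<tau> > 0" and Z: "Zc f \<tau> y > 0"
  shows "ln (gauss_dens \<tau> x x' / q_dens f \<tau> y x') * gauss_dens \<tau> x x' =
     (ln ((2 * pi * \<tau>) powr (- real DIM('a) / 2)) + ln (Zc f \<tau> y) + (norm (y - x))\<^sup>2 / (2 * \<tau>)) * gauss_dens \<tau> x x'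
     + f x' * gauss_dens \<tau> x x' + (1 / \<tau>) * ((y - x) \<bullet> (gauss_dens \<tau> x x' *\<^sub>R (x - x')))"
proof -
  define cst where "cst = (2 * pi * \<tau>) powr (- real DIM('a) / 2)"
  have cst: "cst > 0" using tau by (simp add: cst_def)
  define Z0 where "Z0 = Zc f \<tau> y"
  define A where "A = - (norm (x' - x))\<^sup>2 / (2 * \<tau>)"
  define B where "B = - f x' - (norm (y - x'))\<^sup>2 / (2 * \<tau>)"
  define w where "w = (y - x) \<bullet> (x - x')"
  have g: "gauss_dens \<tau> x x' = cst * exp A" by (simp add: gauss_dens_def cst_def A_def)
  have q: "q_dens f \<tau> y x' = exp B / Z0" by (simp add: q_dens_def B_def Z0_def)
  have Z0: "Z0 > 0" using Z by (simp add: Z0_def)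
  have "ln (gauss_dens \<tau> x x' / q_dens f \<tau> y x') = ln cst + A - (B - ln Z0)"
    unfolding g q using cst Z0 by (simp add: ln_mult ln_div)
  also have "\<dots> = ln cst + ln Z0 + f x' + ((norm (y - x'))\<^sup>2 - (norm (x' - x))\<^sup>2) / (2 * \<tau>)"
    by (simp add: A_def B_def diff_divide_distrib)
  also have "(norm (y - x'))\<^sup>2 - (norm (x' - x))\<^sup>2 = (norm (y - x))\<^sup>2 + 2 * w"
    using norm_sq_expand[of y x' x] by (simp add: w_def)
  also have "ln cst + ln Z0 + f x' + ((norm (y - x))\<^sup>2 + 2 * w) / (2 * \<tau>) =
      ln cst + ln Z0 + (norm (y - x))\<^sup>2 / (2 * \<tau>) + f x' + (1 / \<tau>) * w"
    using tau by (simp add: field_simps)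
  finally have L: "ln (gauss_dens \<tau> x x' / q_dens f \<tau> y x') = ln cst + ln Z0 + (norm (y - x))\<^sup>2 / (2 * \<tau>) + f x' + (1 / \<tau>) * w" .
  have I: "(y - x) \<bullet> (gauss_dens \<tau> x x' *\<^sub>R (x - x')) = gauss_dens \<tau> x x' * w"
    by (simp add: w_def)
  show ?thesis unfolding L I cst_def[symmetric] Z0_def[symmetric] by (simp add: algebra_simps)
qed

lemma KL_form:
  fixes f :: "'a::euclidean_space \<Rightarrow> real"
  assumes fm: "f \<in> borel_measurable lebesgue"
    and c: "\<forall>y. c \<le> f y"
    and fi: "(\<integral>\<^sup>+ x'. ennreal (\<bar>f x'\<bar> * gauss_dens \<tau> x x') \<partial>lebesgue) < \<infinity>"
    and tau: "\<tau> > 0"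
  shows "KL_div (gauss_dens \<tau> x) (q_dens f \<tau> y) =
     (ln ((2 * pi * \<tau>) powr (- real DIM('a) / 2)) + ln (Zc f \<tau> y) + (norm (y - x))\<^sup>2 / (2 * \<tau>))
       * integral\<^sup>L lborel (gauss_dens \<tau> (0::'a)) + heat_reg f \<tau> x"
proof -
  define K0 where "K0 = ln ((2 * pi * \<tau>) powr (- real DIM('a) / 2)) + ln (Zc f \<tau> y) + (norm (y - x))\<^sup>2 / (2 * \<tau>)"
  have Z: "Zc f \<tau> y > 0" using Zc_pos[OF fm c tau] .
  have i1: "integrable lebesgue (\<lambda>x'. K0 * gauss_dens \<tau> x x')"
    using gauss_leb(1)[OF tau, of x] by (rule integrable_mult_right)
  have i2: "integrable lebesgue (\<lambda>x'. f x' * gauss_dens \<tau> x x')"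
    by (rule f_gauss_integrable[OF fm fi])
  have i3: "integrable lebesgue (\<lambda>x'. (1 / \<tau>) * ((y - x) \<bullet> (gauss_dens \<tau> x x' *\<^sub>R (x - x'))))"
    using mom_leb(1)[OF tau, of x] by (intro integrable_mult_right integrable_inner_right)
  have "KL_div (gauss_dens \<tau> x) (q_dens f \<tau> y) =
      (\<integral>x'. (K0 * gauss_dens \<tau> x x' + f x' * gauss_dens \<tau> x x')
            + (1 / \<tau>) * ((y - x) \<bullet> (gauss_dens \<tau> x x' *\<^sub>R (x - x'))) \<partial>lebesgue)"
    unfolding KL_div_def K0_def using pointwise_KL[OF tau Z] by simp
  also have "\<dots> = (\<integral>x'. K0 * gauss_dens \<tau> x x' + f x' * gauss_dens \<tau> x x' \<partial>lebesgue)
        + (\<integral>x'. (1 / \<tau>) * ((y - x) \<bullet> (gauss_dens \<tau> x x' *\<^sub>R (x - x'))) \<partial>lebesgue)"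
    by (rule Bochner_Integration.integral_add[OF Bochner_Integration.integrable_add[OF i1 i2] i3])
  also have "(\<integral>x'. K0 * gauss_dens \<tau> x x' + f x' * gauss_dens \<tau> x x' \<partial>lebesgue)
      = (\<integral>x'. K0 * gauss_dens \<tau> x x' \<partial>lebesgue) + heat_reg f \<tau> x"
    unfolding heat_reg_def by (rule Bochner_Integration.integral_add[OF i1 i2])
  also have "(\<integral>x'. K0 * gauss_dens \<tau> x x' \<partial>lebesgue) = K0 * integral\<^sup>L lborel (gauss_dens \<tau> (0::'a))"
    using gauss_leb(2)[OF tau, of x] by simp
  also have "(\<integral>x'. (1 / \<tau>) * ((y - x) \<bullet> (gauss_dens \<tau> x x' *\<^sub>R (x - x'))) \<partial>lebesgue) = 0"
  proof -
    have "(\<integral>x'. (1 / \<tau>) * ((y - x) \<bullet> (gauss_dens \<tau> x x' *\<^sub>R (x - x'))) \<partial>lebesgue)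
        = (1 / \<tau>) * ((y - x) \<bullet> (\<integral>x'. gauss_dens \<tau> x x' *\<^sub>R (x - x') \<partial>lebesgue))"
    proof -
      have "(\<integral>x'. (y - x) \<bullet> (gauss_dens \<tau> x x' *\<^sub>R (x - x')) \<partial>lebesgue)
          = (y - x) \<bullet> (\<integral>x'. gauss_dens \<tau> x x' *\<^sub>R (x - x') \<partial>lebesgue)"
        by (rule integral_inner_right) (rule mom_leb(1)[OF tau])
      then show ?thesis by (simp only: integral_mult_right_zero)
    qed
    then show ?thesis using mom_leb(2)[OF tau, of x] by simp
  qed
  finally show ?thesis by (simp add: K0_def)
qed

theorem theorem4:
  fixes f :: "'a::euclidean_space \<Rightarrow> real"
    and \<tau> :: real and xs :: "nat \<Rightarrow> 'a" and K :: nat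
  assumes f_meas: "f \<in> borel_measurable lebesgue"
    and f_bdd_below: "\<exists>c. \<forall>y. c \<le> f y"
    and f_int: "\<forall>x. (\<integral>\<^sup>+ x'. ennreal (\<bar>f x'\<bar> * gauss_dens \<tau> x x') \<partial>lebesgue) < \<infinity>"
    and tau_pos: "\<tau> > 0"
    and minimizer: "\<forall>k<K. \<forall>y. KL_div (gauss_dens \<tau> (xs (Suc k))) (q_dens f \<tau> (xs k))
                                 \<le> KL_div (gauss_dens \<tau> y) (q_dens f \<tau> (xs k))"
  shows "\<forall>k. 1 \<le> k \<and> k \<le> K \<longrightarrow> heat_reg f \<tau> (xs k) \<le> heat_reg f \<tau> (xs (k - 1))"
proof (intro allI impI)
  fix k assume k: "1 \<le> k \<and> k \<le> K"
  obtain c where c: "\<forall>y. c \<le> f y" using f_bdd_below by blast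
  obtain j where kj: "k = Suc j" using k by (cases k) auto
  have jK: "j < K" using k kj by simp
  define G where "G = integral\<^sup>L lborel (gauss_dens \<tau> (0::'a))"
  define C where "C = ln ((2 * pi * \<tau>) powr (- real DIM('a) / 2)) + ln (Zc f \<tau> (xs j))"
  have G0: "G \<ge> 0" unfolding G_def
    by (rule Bochner_Integration.integral_nonneg) (simp add: gauss_dens_nonneg)
  have "KL_div (gauss_dens \<tau> (xs (Suc j))) (q_dens f \<tau> (xs j))
        \<le> KL_div (gauss_dens \<tau> (xs j)) (q_dens f \<tau> (xs j))"
    using minimizer jK by blast
  then have "(C + (norm (xs j - xs (Suc j)))\<^sup>2 / (2 * \<tau>)) * G + heat_reg f \<tau> (xs (Suc j))
      \<le> (C + (norm (xs j - xs j))\<^sup>2 / (2 * \<tau>)) * G + heat_reg f \<tau> (xs j)"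
    unfolding KL_form[OF f_meas c f_int[rule_format] tau_pos] C_def G_def .
  moreover have "0 \<le> (norm (xs j - xs (Suc j)))\<^sup>2 / (2 * \<tau>) * G"
    using G0 tau_pos by simp
  ultimately have "heat_reg f \<tau> (xs (Suc j)) \<le> heat_reg f \<tau> (xs j)"
    by (simp add: distrib_right)
  then show "heat_reg f \<tau> (xs k) \<le> heat_reg f \<tau> (xs (k - 1))" using kj by simp
qed

end
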